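(* Let $K\ge 2$, $M,N,d$ be positive integers with $d\le \min(M,N)$, and consider the symmetric system $(M\times N,d)^K$ (i.e. $M^{[k]}=M$, $N^{[k]}=N$, $d^{[k]}=d$ for all $k\in\{1,\dots,K\}$). Then this system is proper if and only if $N_v\ge N_e$, and this holds if and only if $M+N-(K+1)d\ge 0$.
   Context: A $K$-user MIMO interference system $\Pi_{k=1}^K(M^{[k]}\times N^{[k]},d^{[k]})$ is specified by positive integers $M^{[k]}$ (transmit antennas of user $k$), $N^{[k]}$ (receive antennas of user $k$) and $d^{[k]}\le\min(M^{[k]},N^{[k]})$ (number of beams of user $k$), $k\in\mathcal{K}=\{1,\dots,K\}$. Its variables are: for each $j\in\mathcal K$ and $n\in\{1,\dots,d^{[j]}\}$ a set $T_{j,n}$ of $M^{[j]}-d^{[j]}$ variables (the free entries of the $n$-th transmit beam of user $j$, normalized so its top $d^{[j]}\times d^{[j]}$ block of the precoder is the identity), and for each $k\in\mathcal K$ and $m\in\{1,\dots,d^{[k]}\}$ a set $R_{k,m}$ of $N^{[k]}-d^{[k]}$ variables (the free entries of the $m$-th receive beam of user $k$); all these sets are pairwise disjoint. The equations are $E^{kj}_{mn}$ (standing for $\mathbf u^{[k]\dagger}_m \mathbf H^{[kj]}\mathbf v^{[j]}_n=0$) for $j,k\in\mathcal K$, $k\ne j$, $m\in\{1,\dots,d^{[k]}\}$, $n\in\{1,\dots,d^{[j]}\}$; let $\mathcal E$ be the set of all of them and set $\mathrm{var}(E^{kj}_{mn})=T_{j,n}\cup R_{k,m}$, so $|\mathrm{var}(E^{kj}_{mn})|=(M^{[j]}-d^{[j]})+(N^{[k]}-d^{[k]})$.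 The system is called proper if for every subset $S\subseteq\mathcal E$, $|S|\le\left|\bigcup_{E\in S}\mathrm{var}(E)\right|$, and improper otherwise. The total numbers of equations and variables are $N_e=\sum_{k,j\in\mathcal K,\,k\ne j} d^{[k]}d^{[j]}$ and $N_v=\sum_{k=1}^K d^{[k]}(M^{[k]}+N^{[k]}-2d^{[k]})$. *)

theory Defs
  imports Main
begin

text \<open>A K-user MIMO interference system is given by K and functions
  Mt (transmit antennas), Nr (receive antennas), d (beams) on users 1..K.
  Variables are encoded as tuples (b, user, beam, i): b = False for transmit
  variables T_{j,n} (i < Mt j - d j), b = True for receive variables R_{k,m}
  (i < Nr k - d k).  Equations E^{kj}_{mn} are encoded as tuples (k, j, m, n).\<close>

definition Tvars :: "(nat \<Rightarrow> nat) \<Rightarrow> (nat \<Rightarrow> nat) \<Rightarrow> nat \<Rightarrow> nat \<Rightarrow> (bool \<times> nat \<times> nat \<times> nat) set" where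
  "Tvars Mt d j n = {(False, j, n, i) | i. i < Mt j - d j}"

definition Rvars :: "(nat \<Rightarrow> nat) \<Rightarrow> (nat \<Rightarrow> nat) \<Rightarrow> nat \<Rightarrow> nat \<Rightarrow> (bool \<times> nat \<times> nat \<times> nat) set" where
  "Rvars Nr d k m = {(True, k, m, i) | i. i < Nr k - d k}"

definition eqs :: "nat \<Rightarrow> (nat \<Rightarrow> nat) \<Rightarrow> (nat \<times> nat \<times> nat \<times> nat) set" where
  "eqs K d = {(k, j, m, n). k \<in> {1..K} \<and> j \<in> {1..K} \<and> k \<noteq> j \<and> m \<in> {1..d k} \<and> n \<in> {1..d j}}"

definition var_of :: "(nat \<Rightarrow> nat) \<Rightarrow> (nat \<Rightarrow> nat) \<Rightarrow> (nat \<Rightarrow> nat) \<Rightarrow> nat \<times> nat \<times> nat \<times> nat \<Rightarrow> (bool \<times> nat \<times> nat \<times> nat) set" where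
  "var_of Mt Nr d E = (case E of (k, j, m, n) \<Rightarrow> Tvars Mt d j n \<union> Rvars Nr d k m)"

definition proper :: "nat \<Rightarrow> (nat \<Rightarrow> nat) \<Rightarrow> (nat \<Rightarrow> nat) \<Rightarrow> (nat \<Rightarrow> nat) \<Rightarrow> bool" where
  "proper K Mt Nr d \<longleftrightarrow>
     (\<forall>S \<subseteq> eqs K d. card S \<le> card (\<Union>E\<in>S. var_of Mt Nr d E))"

definition num_eqs :: "nat \<Rightarrow> (nat \<Rightarrow> nat) \<Rightarrow> nat" where
  "num_eqs K d = (\<Sum>k\<in>{1..K}. \<Sum>j\<in>{1..K} - {k}. d k * d j)"

definition num_vars :: "nat \<Rightarrow> (nat \<Rightarrow> nat) \<Rightarrow> (nat \<Rightarrow> nat) \<Rightarrow> (nat \<Rightarrow> nat) \<Rightarrow> int" where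
  "num_vars K Mt Nr d = (\<Sum>k\<in>{1..K}. int (d k) * (int (Mt k) + int (Nr k) - 2 * int (d k)))"

end

theory Submission
  imports Defs
begin

lemma eqs_finite: "finite (eqs K d)"
proof -
  have "eqs K d \<subseteq> {1..K} \<times> {1..K} \<times> (\<Union>k\<in>{1..K}. {1..d k}) \<times> (\<Union>k\<in>{1..K}. {1..d k})"
  proof
    fix x assume "x \<in> eqs K d"
    then obtain k j m n where "x = (k,j,m,n)" "k \<in> {1..K}" "j \<in> {1..K}" "m \<in> {1..d k}" "n \<in> {1..d j}"
      unfolding eqs_def by blast
    then show "x \<in> {1..K} \<times> {1..K} \<times> (\<Union>k\<in>{1..K}. {1..d k}) \<times> (\<Union>k\<in>{1..K}. {1..d k})"
      by blast
  qed
  thus ?thesis by (rule finite_subset) simp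
qed

lemma card_eqs: "card (eqs K (\<lambda>_. d)) = K * ((K - 1) * (d * d))"
proof -
  let ?F = "\<lambda>k. (\<lambda>(j,m,n). (k,j,m,n)) ` ((({1..K}-{k}) \<times> {1..d} \<times> {1..d}))"
  have e1: "eqs K (\<lambda>_. d) = (\<Union>k\<in>{1..K}. ?F k)"
  proof
    show "eqs K (\<lambda>_. d) \<subseteq> (\<Union>k\<in>{1..K}. ?F k)"
    proof
      fix x assume "x \<in> eqs K (\<lambda>_. d)"
      then obtain k j m n where "x = (k,j,m,n)" "k \<in> {1..K}" "j \<in> {1..K}" "k \<noteq> j" "m \<in> {1..d}" "n \<in> {1..d}"
        unfolding eqs_def by blast
      then show "x \<in> (\<Union>k\<in>{1..K}. ?F k)"
        apply -
        apply (rule UN_I[of k], assumption)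
        apply (rule image_eqI[of _ _ "(j,m,n)"]) by auto
    qed
    show "(\<Union>k\<in>{1..K}. ?F k) \<subseteq> eqs K (\<lambda>_. d)"
    proof
      fix x assume "x \<in> (\<Union>k\<in>{1..K}. ?F k)"
      then obtain k where k: "k \<in> {1..K}" "x \<in> ?F k" by blast
      obtain p where p: "x = (\<lambda>(j,m,n). (k,j,m,n)) p" "p \<in> ({1..K}-{k}) \<times> {1..d} \<times> {1..d}" using k(2) by (rule imageE)
      obtain j m n where "p = (j,m,n)" by (cases p) auto
      with p have "(j,m,n) \<in> ({1..K}-{k}) \<times> {1..d} \<times> {1..d}" "x = (k,j,m,n)" by auto
      then show "x \<in> eqs K (\<lambda>_. d)" using k(1) unfolding eqs_def by simp
    qed

  qed
  have e2: "card (\<Union>k\<in>{1..K}. ?F k) = (\<Sum>k\<in>{1..K}. card (?F k))"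
  proof (rule card_UN_disjoint)
    show "\<forall>i\<in>{1..K}. \<forall>j\<in>{1..K}. i \<noteq> j \<longrightarrow> ?F i \<inter> ?F j = {}" by auto
  qed auto
  have e3: "(\<Sum>k\<in>{1..K}. card (?F k)) = (\<Sum>k\<in>{1..K}. (K - 1) * (d * d))"
  proof (rule sum.cong)
    fix k assume k: "k \<in> {1..K}"
    have "card (?F k) = card (({1..K}-{k}) \<times> {1..d} \<times> {1..d})"
      by (rule card_image) (simp add: inj_on_def)
    also have "\<dots> = (K - 1) * (d * d)" using k by (simp add: card_cartesian_product)
    finally show "card (?F k) = (K - 1) * (d * d)" .
  qed simp
  have "card (eqs K (\<lambda>_. d)) = (\<Sum>k\<in>{1..K}. (K - 1) * (d * d))"
    unfolding e1 e2 e3 by (rule refl)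
  then show ?thesis by simp
qed

lemma eqs_elim:
  assumes "x \<in> eqs K (\<lambda>_. d)"
  obtains k j m n where "x = (k,j,m,n)" "k \<in> {1..K}" "j \<in> {1..K}" "k \<noteq> j" "m \<in> {1..d}" "n \<in> {1..d}"
  using assms unfolding eqs_def by blast

lemma sub_T:
  assumes S: "S \<subseteq> eqs K (\<lambda>_. d)"
  shows "S \<subseteq> (\<Union>p\<in>(\<lambda>(k,j,m,n). (j,n)) ` S. (\<lambda>(k,m). (k, fst p, m, snd p)) ` (({1..K}-{fst p}) \<times> {1..d}))"
proof
  fix x assume x: "x \<in> S"
  then obtain k j m n where kj: "x = (k,j,m,n)" "k \<in> {1..K}" "j \<in> {1..K}" "k \<noteq> j" "m \<in> {1..d}" "n \<in> {1..d}"
    using S by (blast elim: eqs_elim)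
  have p: "(j,n) \<in> (\<lambda>(k,j,m,n). (j,n)) ` S" using x kj(1) by (auto intro!: image_eqI[of _ _ x])
  have "x \<in> (\<lambda>(k,m). (k, fst (j,n), m, snd (j,n))) ` (({1..K}-{fst (j,n)}) \<times> {1..d})"
    by (rule image_eqI[of _ _ "(k,m)"]) (use kj in auto)
  then show "x \<in> (\<Union>p\<in>(\<lambda>(k,j,m,n). (j,n)) ` S. (\<lambda>(k,m). (k, fst p, m, snd p)) ` (({1..K}-{fst p}) \<times> {1..d}))"
    using p by (rule UN_I[rotated])
qed

lemma sub_R:
  assumes S: "S \<subseteq> eqs K (\<lambda>_. d)"
  shows "S \<subseteq> (\<Union>p\<in>(\<lambda>(k,j,m,n). (k,m)) ` S. (\<lambda>(j,n). (fst p, j, snd p, n)) ` (({1..K}-{fst p}) \<times> {1..d}))"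
proof
  fix x assume x: "x \<in> S"
  then obtain k j m n where kj: "x = (k,j,m,n)" "k \<in> {1..K}" "j \<in> {1..K}" "k \<noteq> j" "m \<in> {1..d}" "n \<in> {1..d}"
    using S by (blast elim: eqs_elim)
  have p: "(k,m) \<in> (\<lambda>(k,j,m,n). (k,m)) ` S" using x kj(1) by (auto intro!: image_eqI[of _ _ x])
  have "x \<in> (\<lambda>(j,n). (fst (k,m), j, snd (k,m), n)) ` (({1..K}-{fst (k,m)}) \<times> {1..d})"
    by (rule image_eqI[of _ _ "(j,n)"]) (use kj in auto)
  then show "x \<in> (\<Union>p\<in>(\<lambda>(k,j,m,n). (k,m)) ` S. (\<lambda>(j,n). (fst p, j, snd p, n)) ` (({1..K}-{fst p}) \<times> {1..d}))"
    using p by (rule UN_I[rotated])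
qed

lemma card_UN_bound:
  assumes "finite P" "\<And>p. p \<in> P \<Longrightarrow> finite (G p)" "\<And>p. p \<in> P \<Longrightarrow> card (G p) \<le> c" "S \<subseteq> (\<Union>p\<in>P. G p)"
  shows "card S \<le> c * card P"
proof -
  have "card S \<le> card (\<Union>p\<in>P. G p)" using assms by (intro card_mono) auto
  also have "\<dots> \<le> (\<Sum>p\<in>P. card (G p))" by (rule card_UN_le) (use assms in auto)
  also have "\<dots> \<le> (\<Sum>p\<in>P. c)" by (rule sum_mono) (use assms in auto)
  finally show ?thesis by (simp add: mult.commute)
qed

lemma Gcard:
  assumes "i \<in> {1..K}"
  shows "card (f ` (({1..K}-{i}) \<times> {1..d})) \<le> (K - 1) * (d::nat)"
proof -
  have "card (f ` (({1..K}-{i}) \<times> {1..d})) \<le> card (({1..K}-{i}) \<times> {1..d})"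
    by (rule card_image_le) simp
  also have "\<dots> = (K - 1) * d" using assms by (simp add: card_cartesian_product)
  finally show ?thesis .
qed

lemma PT_range: "S \<subseteq> eqs K (\<lambda>_. d) \<Longrightarrow> p \<in> (\<lambda>(k,j,m,n). (j,n)) ` S \<Longrightarrow> fst p \<in> {1..K}"
  by (auto simp: eqs_def)
lemma PR_range: "S \<subseteq> eqs K (\<lambda>_. d) \<Longrightarrow> p \<in> (\<lambda>(k,j,m,n). (k,m)) ` S \<Longrightarrow> fst p \<in> {1..K}"
  by (auto simp: eqs_def)

lemma vars_eq:
  "(\<Union>E\<in>S. var_of (\<lambda>_. M) (\<lambda>_. N) (\<lambda>_. d) E) =
     (\<lambda>((j,n),i). (False,j,n,i)) ` ((\<lambda>(k,j,m,n). (j,n)) ` S \<times> {..<M-d}) \<union> (\<lambda>((k,m),i). (True,k,m,i)) ` ((\<lambda>(k,j,m,n). (k,m)) ` S \<times> {..<N-d})"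
  (is "?L = ?A \<union> ?B")
proof
  show "?L \<subseteq> ?A \<union> ?B"
  proof
    fix v assume "v \<in> ?L"
    then obtain E where E: "E \<in> S" "v \<in> var_of (\<lambda>_. M) (\<lambda>_. N) (\<lambda>_. d) E" by blast
    obtain k j m n where En: "E = (k,j,m,n)" by (cases E) auto
    from E(2) have "v \<in> Tvars (\<lambda>_. M) (\<lambda>_. d) j n \<or> v \<in> Rvars (\<lambda>_. N) (\<lambda>_. d) k m"
      unfolding En var_of_def by simp
    then show "v \<in> ?A \<union> ?B"
    proof
      assume "v \<in> Tvars (\<lambda>_. M) (\<lambda>_. d) j n"
      then obtain i where i: "v = (False,j,n,i)" "i < M - d" unfolding Tvars_def by blast
      have "(j,n) \<in> (\<lambda>(k,j,m,n). (j,n)) ` S" using E(1) En by (auto intro!: image_eqI[of _ _ E])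
      then have "v \<in> ?A" by (intro image_eqI[of _ _ "((j,n),i)"]) (simp add: i(1), simp add: i(2))
      then show ?thesis by blast
    next
      assume "v \<in> Rvars (\<lambda>_. N) (\<lambda>_. d) k m"
      then obtain i where i: "v = (True,k,m,i)" "i < N - d" unfolding Rvars_def by blast
      have "(k,m) \<in> (\<lambda>(k,j,m,n). (k,m)) ` S" using E(1) En by (auto intro!: image_eqI[of _ _ E])
      then have "v \<in> ?B" by (intro image_eqI[of _ _ "((k,m),i)"]) (simp add: i(1), simp add: i(2))
      then show ?thesis by blast
    qed
  qed
  show "?A \<union> ?B \<subseteq> ?L"
  proof
    fix v assume "v \<in> ?A \<union> ?B"
    then show "v \<in> ?L"
    proof
      assume "v \<in> ?A"
      then obtain j n i E where E: "E \<in> S" "(j,n) = (\<lambda>(k,j,m,n). (j,n)) E" "i < M - d" "v = (False,j,n,i)"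
        by auto
      obtain k j' m n' where En: "E = (k,j',m,n')" by (cases E) auto
      have "v \<in> var_of (\<lambda>_. M) (\<lambda>_. N) (\<lambda>_. d) E" using E En unfolding var_of_def Tvars_def by auto
      then show ?thesis using E(1) by blast
    next
      assume "v \<in> ?B"
      then obtain k m i E where E: "E \<in> S" "(k,m) = (\<lambda>(k,j,m,n). (k,m)) E" "i < N - d" "v = (True,k,m,i)"
        by auto
      obtain k' j m' n where En: "E = (k',j,m',n)" by (cases E) auto
      have "v \<in> var_of (\<lambda>_. M) (\<lambda>_. N) (\<lambda>_. d) E" using E En unfolding var_of_def Rvars_def by auto
      then show ?thesis using E(1) by blast
    qed
  qed
qed

lemma main_bound:
  fixes K M N d :: nat
  assumes ab: "(K - 1) * d \<le> (M - d) + (N - d)"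
    and S: "S \<subseteq> eqs K (\<lambda>_. d)"
  shows "card S \<le> card (\<Union>E\<in>S. var_of (\<lambda>_. M) (\<lambda>_. N) (\<lambda>_. d) E)"
proof -
  define a where "a = M - d"
  define b where "b = N - d"
  define c where "c = (K - 1) * d"
  define PT where "PT = (\<lambda>(k::nat,j::nat,m::nat,n::nat). (j,n)) ` S"
  define PR where "PR = (\<lambda>(k::nat,j::nat,m::nat,n::nat). (k,m)) ` S"
  have fS: "finite S" using S eqs_finite finite_subset by blast
  have fPT: "finite PT" "finite PR" using fS unfolding PT_def PR_def by auto
  have cU: "card (\<Union>E\<in>S. var_of (\<lambda>_. M) (\<lambda>_. N) (\<lambda>_. d) E) = card PT * a + card PR * b"
  proof -
    have i1: "inj_on (\<lambda>((j::nat,n::nat),i::nat). (False,j,n,i)) (PT \<times> {..<a})" by (auto simp: inj_on_def)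
    have i2: "inj_on (\<lambda>((k::nat,m::nat),i::nat). (True,k,m,i)) (PR \<times> {..<b})" by (auto simp: inj_on_def)
    have dj: "(\<lambda>((j::nat,n::nat),i::nat). (False,j,n,i)) ` (PT \<times> {..<a}) \<inter> (\<lambda>((k::nat,m::nat),i::nat). (True,k,m,i)) ` (PR \<times> {..<b}) = {}"
      by auto
    have "card ((\<lambda>((j::nat,n::nat),i::nat). (False,j,n,i)) ` (PT \<times> {..<a}) \<union> (\<lambda>((k::nat,m::nat),i::nat). (True,k,m,i)) ` (PR \<times> {..<b}))
        = card ((\<lambda>((j::nat,n::nat),i::nat). (False,j,n,i)) ` (PT \<times> {..<a})) + card ((\<lambda>((k::nat,m::nat),i::nat). (True,k,m,i)) ` (PR \<times> {..<b}))"
      by (rule card_Un_disjoint) (use fPT dj in auto)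
    also have "\<dots> = card PT * a + card PR * b"
      using card_image[OF i1] card_image[OF i2] by (simp add: card_cartesian_product)
    finally show ?thesis unfolding vars_eq PT_def PR_def a_def b_def .
  qed
  have b1: "card S \<le> card PR * card PT"
  proof -
    have inj: "inj_on (\<lambda>(k::nat,j::nat,m::nat,n::nat). ((k,m),(j,n))) S" by (auto simp: inj_on_def)
    have sub: "(\<lambda>(k::nat,j::nat,m::nat,n::nat). ((k,m),(j,n))) ` S \<subseteq> PR \<times> PT"
    proof
      fix y assume "y \<in> (\<lambda>(k::nat,j::nat,m::nat,n::nat). ((k,m),(j,n))) ` S"
      then obtain E where E: "E \<in> S" "y = (\<lambda>(k::nat,j::nat,m::nat,n::nat). ((k,m),(j,n))) E" by blast
      obtain k j m n where En: "E = (k,j,m,n)" by (cases E) auto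
      have "(k,m) \<in> PR" unfolding PR_def using E(1) En by (intro image_eqI[of _ _ E]) simp_all
      moreover have "(j,n) \<in> PT" unfolding PT_def using E(1) En by (intro image_eqI[of _ _ E]) simp_all
      ultimately show "y \<in> PR \<times> PT" using E(2) En by simp
    qed
    have "card S = card ((\<lambda>(k::nat,j::nat,m::nat,n::nat). ((k,m),(j,n))) ` S)" using card_image[OF inj] by simp
    also have "\<dots> \<le> card (PR \<times> PT)" by (rule card_mono[OF _ sub]) (use fPT in simp)
    finally show ?thesis by (simp add: card_cartesian_product)
  qed
  have pr2: "\<And>p. p \<in> PT \<Longrightarrow> fst p \<in> {1..K}" using PT_range[OF S] unfolding PT_def by blast
  have b2: "card S \<le> c * card PT"
    unfolding c_def
    apply (rule card_UN_bound[OF fPT(1) _ _ sub_T[OF S, folded PT_def]])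
     apply simp
    apply (rule Gcard)
    apply (erule pr2)
    done
  have pr3: "\<And>p. p \<in> PR \<Longrightarrow> fst p \<in> {1..K}" using PR_range[OF S] unfolding PR_def by blast
  have b3: "card S \<le> c * card PR"
    unfolding c_def
    apply (rule card_UN_bound[OF fPT(2) _ _ sub_R[OF S, folded PR_def]])
     apply simp
    apply (rule Gcard)
    apply (erule pr3)
    done
  have cab: "c \<le> a + b" using ab unfolding a_def b_def c_def .
  have "card S \<le> card PT * a + card PR * b"
  proof (cases "card PT \<le> card PR")
    case True
    have "c * card PT \<le> (a + b) * card PT" using cab by simp
    also have "\<dots> \<le> card PT * a + card PR * b" using True
      by (simp add: algebra_simps)
    finally show ?thesis using b2 by simp
  next
    case False
    have "c * card PR \<le> (a + b) * card PR" using cab by simp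
    also have "\<dots> \<le> card PT * a + card PR * b" using False
      by (simp add: algebra_simps)
    finally show ?thesis using b3 by simp
  qed
  thus ?thesis using cU by simp
qed

lemma PT_sub: "S \<subseteq> eqs K (\<lambda>_. d) \<Longrightarrow> (\<lambda>(k::nat,j::nat,m::nat,n::nat). (j,n)) ` S \<subseteq> {1..K} \<times> {1..d}"
  by (auto simp: eqs_def)
lemma PR_sub: "S \<subseteq> eqs K (\<lambda>_. d) \<Longrightarrow> (\<lambda>(k::nat,j::nat,m::nat,n::nat). (k,m)) ` S \<subseteq> {1..K} \<times> {1..d}"
  by (auto simp: eqs_def)

lemma upper_vars:
  "card (\<Union>E\<in>eqs K (\<lambda>_. d). var_of (\<lambda>_. M) (\<lambda>_. N) (\<lambda>_. d) E) \<le> K*d*(M-d) + K*d*(N-d)"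
proof -
  define PT where "PT = (\<lambda>(k::nat,j::nat,m::nat,n::nat). (j,n)) ` eqs K (\<lambda>_. d)"
  define PR where "PR = (\<lambda>(k::nat,j::nat,m::nat,n::nat). (k,m)) ` eqs K (\<lambda>_. d)"
  define A where "A = (\<lambda>((j::nat,n::nat),i::nat). (False,j,n,i)) ` (PT \<times> {..<M-d})"
  define B where "B = (\<lambda>((k::nat,m::nat),i::nat). (True,k,m,i)) ` (PR \<times> {..<N-d})"
  have f: "finite ({1..K} \<times> {1..d})" by simp
  have cPT: "card PT \<le> K * d" using card_mono[OF f PT_sub[OF order_refl]] unfolding PT_def by simp
  have cPR: "card PR \<le> K * d" using card_mono[OF f PR_sub[OF order_refl]] unfolding PR_def by simp
  have fPT: "finite PT" "finite PR" unfolding PT_def PR_def using eqs_finite by auto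
  have "card (A \<union> B) \<le> card A + card B" by (rule card_Un_le)
  moreover have "card A \<le> card PT * (M - d)" unfolding A_def
    using card_image_le[of "PT \<times> {..<M-d}" "\<lambda>((j::nat,n::nat),i::nat). (False,j,n,i)"] fPT
    by (simp add: card_cartesian_product)
  moreover have "card B \<le> card PR * (N - d)" unfolding B_def
    using card_image_le[of "PR \<times> {..<N-d}" "\<lambda>((k::nat,m::nat),i::nat). (True,k,m,i)"] fPT
    by (simp add: card_cartesian_product)
  moreover have "card PT * (M - d) \<le> K*d*(M-d)" using cPT by (rule mult_right_mono) simp
  moreover have "card PR * (N - d) \<le> K*d*(N-d)" using cPR by (rule mult_right_mono) simp
  moreover have VE: "(\<Union>E\<in>eqs K (\<lambda>_. d). var_of (\<lambda>_. M) (\<lambda>_. N) (\<lambda>_. d) E) = A \<union> B"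
    unfolding A_def B_def PT_def PR_def by (rule vars_eq)
  ultimately have "card (A \<union> B) \<le> K*d*(M-d) + K*d*(N-d)" by linarith
  then show ?thesis unfolding VE .
qed

theorem theorem1:
  fixes K M N d :: nat
  assumes "K \<ge> 2" and "M > 0" and "N > 0" and "d > 0"
    and "d \<le> min M N"
  shows "(proper K (\<lambda>_. M) (\<lambda>_. N) (\<lambda>_. d) \<longleftrightarrow>
            num_vars K (\<lambda>_. M) (\<lambda>_. N) (\<lambda>_. d) \<ge> int (num_eqs K (\<lambda>_. d)))
       \<and> (num_vars K (\<lambda>_. M) (\<lambda>_. N) (\<lambda>_. d) \<ge> int (num_eqs K (\<lambda>_. d)) \<longleftrightarrow>
            int M + int N - (int K + 1) * int d \<ge> 0)"
proof -
  have nv: "num_vars K (\<lambda>_. M) (\<lambda>_. N) (\<lambda>_. d) = int K * (int d * (int M + int N - 2 * int d))"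
    unfolding num_vars_def by simp
  have ne: "num_eqs K (\<lambda>_. d) = K * ((K - 1) * (d * d))"
    unfolding num_eqs_def using assms(1)
    by (simp add: card_Diff_singleton_if)
  have dM: "d \<le> M" "d \<le> N" using assms(5) by auto
  have Kpos: "K > 0" "K \<ge> 1" using assms(1) by auto
  have iK: "int (K - 1) = int K - 1" using Kpos by simp
  have ine: "int (num_eqs K (\<lambda>_. d)) = int K * (int d * ((int K - 1) * int d))"
    unfolding ne by (simp add: iK algebra_simps)
  have E2a: "num_vars K (\<lambda>_. M) (\<lambda>_. N) (\<lambda>_. d) \<ge> int (num_eqs K (\<lambda>_. d)) \<longleftrightarrow>
       int K * (int d * ((int K - 1) * int d)) \<le> int K * (int d * (int M + int N - 2 * int d))"
    using nv ine by simp
  have E2b: "int K * (int d * ((int K - 1) * int d)) \<le> int K * (int d * (int M + int N - 2 * int d))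
      \<longleftrightarrow> (int K - 1) * int d \<le> int M + int N - 2 * int d"
    using Kpos assms(4) by (simp add: mult_le_cancel_left_pos)
  have E2c: "(int K - 1) * int d \<le> int M + int N - 2 * int d \<longleftrightarrow> int M + int N - (int K + 1) * int d \<ge> 0"
    by (simp add: algebra_simps)
  have E2: "num_vars K (\<lambda>_. M) (\<lambda>_. N) (\<lambda>_. d) \<ge> int (num_eqs K (\<lambda>_. d)) \<longleftrightarrow>
            int M + int N - (int K + 1) * int d \<ge> 0"
    using E2a E2b E2c by blast
  have E1: "proper K (\<lambda>_. M) (\<lambda>_. N) (\<lambda>_. d) \<longleftrightarrow>
            num_vars K (\<lambda>_. M) (\<lambda>_. N) (\<lambda>_. d) \<ge> int (num_eqs K (\<lambda>_. d))"
  proof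
    assume P: "proper K (\<lambda>_. M) (\<lambda>_. N) (\<lambda>_. d)"
    have "card (eqs K (\<lambda>_. d)) \<le> card (\<Union>E\<in>eqs K (\<lambda>_. d). var_of (\<lambda>_. M) (\<lambda>_. N) (\<lambda>_. d) E)"
      using P unfolding proper_def by blast
    hence "K * ((K - 1) * (d * d)) \<le> K*d*(M-d) + K*d*(N-d)"
      using upper_vars[where K=K and d=d and M=M and N=N] unfolding card_eqs by linarith
    hence "int (K * ((K - 1) * (d * d))) \<le> int (K*d*(M-d) + K*d*(N-d))"
      by (simp only: of_nat_le_iff)
    hence "int (num_eqs K (\<lambda>_. d)) \<le> int K * int d * (int M - int d) + int K * int d * (int N - int d)"
      unfolding ne using dM by (simp add: of_nat_diff)
    thus "num_vars K (\<lambda>_. M) (\<lambda>_. N) (\<lambda>_. d) \<ge> int (num_eqs K (\<lambda>_. d))"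
      unfolding nv by (simp add: algebra_simps)
  next
    assume "num_vars K (\<lambda>_. M) (\<lambda>_. N) (\<lambda>_. d) \<ge> int (num_eqs K (\<lambda>_. d))"
    hence h: "(int K - 1) * int d \<le> int M + int N - 2 * int d" using E2a E2b by blast
    have "int ((K - 1) * d) \<le> int ((M - d) + (N - d))"
      using h dM iK by (simp add: of_nat_diff)
    hence "(K - 1) * d \<le> (M - d) + (N - d)" by (simp only: of_nat_le_iff)
    thus "proper K (\<lambda>_. M) (\<lambda>_. N) (\<lambda>_. d)"
      unfolding proper_def using main_bound by blast
  qed
  show ?thesis using E1 E2 by blast
qed

end
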